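(* For every $n\in\mathbb{N}$ and every $\pi\in\mathfrak{S}_n$, $\operatorname{EV}(\Theta(\pi))=\operatorname{Des}(\pi)$.
   Context: For a word $\pi=a_1\cdots a_n$ with distinct positive integer letters, $\operatorname{Des}(\pi)=\{i\in[n-1]:a_i>a_{i+1}\}$. The increasing unordered tree $T'(\pi)$ has root labeled $0$ and vertices $a_1,\dots,a_n$: if $b$ is a right-to-left minimum of $\pi$ then $b$ is a child of the root; otherwise $b$ is a child of the leftmost letter $a$ to the right of $b$ with $a<b$. $\operatorname{EV}(\pi)$ is the set of indices $1\le i\le n$ such that $a_i$ has even height in $T'(\pi)$ (root at height $0$). The complement $\pi^c=b_1\cdots b_n$ is the word on the same letters with $a_i<a_j\iff b_i>b_j$ for all $i<j$. $\Theta$ is defined recursively: the empty word maps to itself, and if $\pi=\sigma m\tau$ with $m$ the smallest letter, $\Theta(\pi)=\Theta(\sigma^c)\,m\,\Theta(\tau)$. *)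

theory Defs
  imports Main
begin

text \<open>Words are lists of distinct positive integers; positions are 1-based.\<close>

definition Des :: "nat list \<Rightarrow> nat set" where
  "Des w = {i \<in> {1..<length w}. w ! (i - 1) > w ! i}"

text \<open>hts w ! k is the height (root 0) in T'(w) of the letter at 0-based position k.
 A letter b with suffix t to its right: if no letter of t is smaller than b, b is a
 right-to-left minimum and a child of the root (height 1); otherwise its parent is the
 leftmost letter of t smaller than b. The heights of letters in t depend only on t.\<close>
fun hts :: "nat list \<Rightarrow> nat list" where
  "hts [] = []"
| "hts (b # t) = (let h = hts t in
     (case find (\<lambda>j. t ! j < b) [0..<length t] of
        None \<Rightarrow> 1
      | Some j \<Rightarrow> Suc (h ! j)) # h)"

definition EV :: "nat list \<Rightarrow> nat set" where
  "EV w = {i \<in> {1..length w}. even (hts w ! (i - 1))}"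

text \<open>0-based position of the first occurrence of a in a list (length if absent).\<close>
fun idx :: "nat list \<Rightarrow> nat \<Rightarrow> nat" where
  "idx [] a = 0"
| "idx (x # xs) a = (if x = a then 0 else Suc (idx xs a))"

lemma idx_less: "a \<in> set xs \<Longrightarrow> idx xs a < length xs"
  by (induction xs) auto

text \<open>Complement: same letters, order reversed (letter of rank r replaced by the letter of
 rank length - 1 - r).\<close>
definition compl_word :: "nat list \<Rightarrow> nat list" where
  "compl_word w = (let s = sort w in map (\<lambda>a. s ! (length w - 1 - idx s a)) w)"

lemma length_compl_word[simp]: "length (compl_word w) = length w"
  by (simp add: compl_word_def Let_def)

function Theta :: "nat list \<Rightarrow> nat list" where
  "Theta w = (if w = [] then [] else
     (let m = Min (set w); k = idx w m in
        Theta (compl_word (take k w)) @ [m] @ Theta (drop (Suc k) w)))"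
  by pat_completeness auto
termination
proof (relation "measure length")
  fix w :: "nat list" and m k
  assume "\<not> w = []" "m = Min (set w)" "k = idx w m"
  then have "k < length w" by (simp add: idx_less)
  then show "(compl_word (take k w), w) \<in> measure length" by simp
next
  fix w :: "nat list" and m k
  assume "\<not> w = []"
  then show "(drop (Suc k) w, w) \<in> measure length" by simp
qed auto

end

theory Submission
  imports Defs
begin
declare Theta.simps[simp del]
lemma idx_nth: "a \<in> set xs \<Longrightarrow> xs ! idx xs a = a"
  by (induction xs) auto

lemma length_hts[simp]: "length (hts w) = length w"
  by (induction w) (auto simp: Let_def)

lemma hts_last: "w \<noteq> [] \<Longrightarrow> hts w ! (length w - 1) = 1"
proof (induction w)
  case (Cons a w)
  then show ?case by (cases w) (auto simp: Let_def nth_Cons split: option.splits)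
qed simp

lemma hts_min_Cons: "\<forall>b\<in>set B. m < b \<Longrightarrow> hts (m # B) = 1 # hts B"
proof -
  assume "\<forall>b\<in>set B. m < b"
  then have "find (\<lambda>j. B ! j < m) [0..<length B] = None"
    by (auto simp: find_None_iff) (meson nth_mem order.asym)
  then show ?thesis by (simp add: Let_def)
qed

lemma hts_append_min:
  assumes "\<forall>a\<in>set A. m < a" "C \<noteq> []" "C ! 0 = m" "hts C ! 0 = 1"
  shows "hts (A @ C) = map Suc (hts A) @ hts C"
  using assms(1)
proof (induction A)
  case Nil then show ?case by simp
next
  case (Cons a A)
  then have IH: "hts (A @ C) = map Suc (hts A) @ hts C" by simp
  have am: "m < a" using Cons by simp
  show ?case
  proof (cases "\<exists>j<length A. A ! j < a")
    case True
    then obtain j where j: "find (\<lambda>j. A ! j < a) [0..<length A] = Some j"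
      by (metis (no_types, lifting) atLeastLessThan_iff find_None_iff not_Some_eq set_upt zero_le)
    then have "find (\<lambda>j. (A@C) ! j < a) [0..<length (A@C)] = Some j"
      using j by (auto simp: find_Some_iff nth_append intro!: exI[of _ j])
    moreover have "j < length A" using j by (auto simp: find_Some_iff)
    ultimately show ?thesis using IH j by (simp add: Let_def nth_append)
  next
    case False
    then have "find (\<lambda>j. (A@C) ! j < a) [0..<length (A@C)] = Some (length A)"
      using assms am by (auto simp: find_Some_iff nth_append intro!: exI[of _ "length A"])
    moreover have "find (\<lambda>j. A ! j < a) [0..<length A] = None"
      using False by (auto simp: find_None_iff)
    ultimately show ?thesis using IH assms by (simp add: Let_def nth_append)
  qed
qed
lemma strict_sorted_less_iff:
  assumes "sorted s" "distinct s" "i < length s" "j < length s"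
  shows "s ! i < s ! j \<longleftrightarrow> i < j"
proof -
  have "sorted_wrt (<) s" using assms by (simp add: strict_sorted_iff)
  show ?thesis
  proof (cases i j rule: linorder_cases)
    case less then show ?thesis using sorted_wrt_nth_less[OF \<open>sorted_wrt (<) s\<close> less assms(4)] by simp
  next
    case equal then show ?thesis by simp
  next
    case greater then show ?thesis using sorted_wrt_nth_less[OF \<open>sorted_wrt (<) s\<close> greater assms(3)] by simp
  qed
qed

lemma compl_nth:
  assumes "i < length w"
  shows "compl_word w ! i = sort w ! (length w - 1 - idx (sort w) (w ! i))"
  using assms by (simp add: compl_word_def Let_def)

lemma compl_less_iff:
  assumes "distinct w" "i < length w" "j < length w"
  shows "compl_word w ! i < compl_word w ! j \<longleftrightarrow> w ! j < w ! i"
proof -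
  define s where "s = sort w"
  have ss: "sorted s" "distinct s" "length s = length w" "set s = set w"
    using assms by (auto simp: s_def)
  define p where "p = idx s (w ! i)"
  define q where "q = idx s (w ! j)"
  have p: "p < length w" "s ! p = w ! i"
    using ss assms idx_less[of "w!i" s] idx_nth[of "w!i" s] by (auto simp: p_def)
  have q: "q < length w" "s ! q = w ! j"
    using ss assms idx_less[of "w!j" s] idx_nth[of "w!j" s] by (auto simp: q_def)
  have "compl_word w ! i < compl_word w ! j \<longleftrightarrow> s ! (length w - 1 - p) < s ! (length w - 1 - q)"
    using assms by (simp add: compl_nth s_def p_def q_def)
  also have "\<dots> \<longleftrightarrow> length w - 1 - p < length w - 1 - q"
    using ss p q by (intro strict_sorted_less_iff) auto
  also have "\<dots> \<longleftrightarrow> q < p" using p q by auto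
  also have "\<dots> \<longleftrightarrow> s ! q < s ! p"
    using ss p q by (intro strict_sorted_less_iff[symmetric]) auto
  finally show ?thesis using p q by simp
qed

lemma compl_distinct: assumes "distinct w" shows "distinct (compl_word w)"
  unfolding distinct_conv_nth
proof (intro allI impI)
  fix i j assume ij: "i < length (compl_word w)" "j < length (compl_word w)" "i \<noteq> j"
  then have "w ! i \<noteq> w ! j" using assms by (simp add: nth_eq_iff_index_eq)
  then have "w ! i < w ! j \<or> w ! j < w ! i" by auto
  then show "compl_word w ! i \<noteq> compl_word w ! j"
    using compl_less_iff[OF assms, of i j] compl_less_iff[OF assms, of j i] ij by auto
qed

lemma compl_set: "set (compl_word w) \<subseteq> set w"
proof
  fix x assume "x \<in> set (compl_word w)"
  then obtain a where a: "a \<in> set w" and x: "x = sort w ! (length w - 1 - idx (sort w) a)"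
    by (auto simp: compl_word_def Let_def)
  have "length w > 0" using a by (cases w) auto
  then have "length w - 1 - idx (sort w) a < length (sort w)" by simp
  then have "x \<in> set (sort w)" unfolding x by (rule nth_mem)
  then show "x \<in> set w" by simp
qed

lemma Theta_unfold:
  "w \<noteq> [] \<Longrightarrow> Theta w = Theta (compl_word (take (idx w (Min (set w))) w)) @
     [Min (set w)] @ Theta (drop (Suc (idx w (Min (set w)))) w)"
  by (subst Theta.simps) (simp add: Let_def)

lemma Theta_len_set: "length (Theta w) = length w \<and> set (Theta w) \<subseteq> set w"
proof (induction w rule: Theta.induct)
  case (1 w)
  show ?case
  proof (cases "w = []")
    case True then show ?thesis by (simp add: Theta.simps)
  next
    case False
    define m where "m = Min (set w)"
    define k where "k = idx w m"
    have mw: "m \<in> set w" using False by (simp add: m_def)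
    have k: "k < length w" using idx_less[OF mw] by (simp add: k_def)
    have IH1: "length (Theta (compl_word (take k w))) = k \<and> set (Theta (compl_word (take k w))) \<subseteq> set w"
      using "1.IH"(1)[OF False m_def k_def] compl_set[of "take k w"] k set_take_subset[of k w]
      by auto
    have IH2: "length (Theta (drop (Suc k) w)) = length w - Suc k \<and> set (Theta (drop (Suc k) w)) \<subseteq> set w"
      using "1.IH"(2)[OF False m_def k_def] set_drop_subset[of "Suc k" w] by auto
    show ?thesis using Theta_unfold[OF False] IH1 IH2 mw k
      unfolding m_def[symmetric] k_def[symmetric] by auto
  qed
qed
lemma EV_iff: "i \<in> EV w \<longleftrightarrow> 1 \<le> i \<and> i \<le> length w \<and> even (hts w ! (i - 1))"
  by (auto simp: EV_def)

lemma Des_iff: "i \<in> Des w \<longleftrightarrow> 1 \<le> i \<and> i < length w \<and> w ! i < w ! (i - 1)"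
  by (auto simp: Des_def)

lemma main: "distinct w \<Longrightarrow> EV (Theta w) = Des w"
proof (induction w rule: Theta.induct)
  case (1 w)
  show ?case
  proof (cases "w = []")
    case True then show ?thesis by (simp add: Theta.simps EV_def Des_def)
  next
    case False
    define m where "m = Min (set w)"
    define k where "k = idx w m"
    define \<sigma> where "\<sigma> = take k w"
    define \<tau> where "\<tau> = drop (Suc k) w"
    define c where "c = compl_word \<sigma>"
    define A where "A = Theta c"
    define B where "B = Theta \<tau>"
    have mw: "m \<in> set w" using False by (simp add: m_def)
    have k: "k < length w" using idx_less[OF mw] by (simp add: k_def)
    have wk: "w ! k = m" using idx_nth[OF mw] by (simp add: k_def)
    have w: "w = \<sigma> @ m # \<tau>" unfolding \<sigma>_def \<tau>_def using id_take_nth_drop[OF k] wk by simp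
    have lens: "length \<sigma> = k" "length \<tau> = length w - Suc k" using k by (auto simp: \<sigma>_def \<tau>_def)
    have dist: "distinct \<sigma>" "distinct \<tau>" "m \<notin> set \<sigma>" "m \<notin> set \<tau>"
    proof -
      have "distinct (\<sigma> @ m # \<tau>)" using "1.prems" w by simp
      then show "distinct \<sigma>" "distinct \<tau>" "m \<notin> set \<sigma>" "m \<notin> set \<tau>" by auto
    qed
    have ge: "\<forall>x\<in>set w. m \<le> x" by (simp add: m_def)
    have gs: "\<forall>x\<in>set \<sigma>. m < x" "\<forall>x\<in>set \<tau>. m < x"
    proof -
      have "\<forall>x\<in>set \<sigma>. m \<le> x" "\<forall>x\<in>set \<tau>. m \<le> x" using ge w by auto
      then show "\<forall>x\<in>set \<sigma>. m < x" "\<forall>x\<in>set \<tau>. m < x" using dist(3,4) by (auto simp: le_less)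
    qed
    have IH1: "EV A = Des c"
      using "1.IH"(1)[OF False m_def k_def] compl_distinct[OF dist(1)] by (simp add: A_def c_def \<sigma>_def)
    have IH2: "EV B = Des \<tau>"
      using "1.IH"(2)[OF False m_def k_def] dist(2) by (simp add: B_def \<tau>_def)
    have lA: "length A = k" "set A \<subseteq> set \<sigma>"
      using Theta_len_set[of c] compl_set[of \<sigma>] lens by (auto simp: A_def c_def)
    have lB: "length B = length \<tau>" "set B \<subseteq> set \<tau>"
      using Theta_len_set[of \<tau>] by (auto simp: B_def)
    have hB: "hts (m # B) = 1 # hts B" using lB gs by (intro hts_min_Cons) auto
    have H: "hts (A @ m # B) = map Suc (hts A) @ 1 # hts B"
      using hts_append_min[of A m "m # B"] hB lA gs by auto
    have Tw: "Theta w = A @ m # B"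
      using Theta_unfold[OF False] unfolding A_def B_def c_def \<sigma>_def \<tau>_def m_def[symmetric] k_def[symmetric]
      by simp
    have cl: "length c = k" using lens by (simp add: c_def)
    show ?thesis
    proof (rule set_eqI)
      fix i
      show "i \<in> EV (Theta w) \<longleftrightarrow> i \<in> Des w"
      proof -
        consider "i = 0" | "1 \<le> i" "i < k" | "i = k" "1 \<le> k" | "i = Suc k" | j where "i = Suc k + j" "1 \<le> j"
        proof -
          have "i = 0 \<or> (1 \<le> i \<and> i < k) \<or> (i = k \<and> 1 \<le> k) \<or> i = Suc k \<or>
                (i = Suc k + (i - Suc k) \<and> 1 \<le> i - Suc k)" by arith
          then show ?thesis using that by blast
        qed
        then show ?thesis
        proof cases
          case 1 then show ?thesis by (simp add: EV_iff Des_iff)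
        next
          case 2
          have e1: "i \<in> EV (Theta w) \<longleftrightarrow> odd (hts A ! (i - 1))"
            using 2 lA k by (auto simp: EV_iff Tw H nth_append)
          have e2: "odd (hts A ! (i - 1)) \<longleftrightarrow> i \<notin> Des c"
            using IH1[symmetric] 2 lA by (auto simp: EV_iff)
          have e3: "i \<notin> Des c \<longleftrightarrow> \<not> c ! i < c ! (i - 1)"
            using 2 cl by (auto simp: Des_iff)
          have e4: "c ! i < c ! (i - 1) \<longleftrightarrow> \<sigma> ! (i - 1) < \<sigma> ! i"
            unfolding c_def using 2 lens by (intro compl_less_iff dist) auto
          have ne: "\<sigma> ! (i - 1) \<noteq> \<sigma> ! i" using 2 lens dist(1) by (simp add: nth_eq_iff_index_eq)
          have e5: "i \<in> Des w \<longleftrightarrow> \<sigma> ! i < \<sigma> ! (i - 1)"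
            using 2 lens k by (auto simp: Des_iff w nth_append)
          show ?thesis using e1 e2 e3 e4 e5 ne by auto
        next
          case 3
          have Ane: "A \<noteq> []" using lA 3 by auto
          have "hts A ! (k - 1) = 1" using hts_last[OF Ane] lA by simp
          then have "hts (Theta w) ! (k - 1) = 2" using 3 lA by (simp add: Tw H nth_append)
          then have e1: "i \<in> EV (Theta w)" using 3 lA by (simp add: EV_iff Tw)
          have "\<sigma> ! (k - 1) \<in> set \<sigma>" using 3 lens by simp
          then have "m < \<sigma> ! (k - 1)" using gs by auto
          then have "i \<in> Des w" using 3 lens k by (simp add: Des_iff w nth_append)
          then show ?thesis using e1 by simp
        next
          case 4
          have "hts (Theta w) ! k = 1" using lA by (simp add: Tw H nth_append)
          then have e1: "i \<notin> EV (Theta w)" using 4 by (simp add: EV_iff)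
          have "i \<notin> Des w"
          proof
            assume "i \<in> Des w"
            then have "Suc k < length w" "w ! Suc k < w ! k" using 4 by (auto simp: Des_iff)
            moreover have "w ! Suc k = \<tau> ! 0" using lens by (simp add: w nth_append)
            moreover have "\<tau> ! 0 \<in> set \<tau>" using lens calculation(1) by simp
            ultimately show False using gs wk by auto
          qed
          then show ?thesis using e1 by simp
        next
          case (5 j)
          have h: "hts (Theta w) ! (i - 1) = hts B ! (j - 1)" using 5 lA by (simp add: Tw H nth_append)
          have l: "length (Theta w) = Suc k + length \<tau>" using lA lB by (simp add: Tw)
          have e1: "i \<in> EV (Theta w) \<longleftrightarrow> j \<in> EV B"
            using 5 h l lB by (auto simp: EV_iff)
          have d: "i \<in> Des w \<longleftrightarrow> j \<in> Des \<tau>"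
            using 5 lens k by (auto simp: Des_iff w nth_append)
          show ?thesis using e1 d IH2 by simp
        qed
      qed
    qed
  qed
qed

theorem theorem8p1:
  fixes n :: nat and \<pi> :: "nat list"
  assumes "distinct \<pi>" and "set \<pi> = {1..n}"
  shows "EV (Theta \<pi>) = Des \<pi>"
  using main[OF assms(1)] .

end
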